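(* If $\mathcal{C}$ is a prevariety over a finite alphabet $A$, then $\mathit{SF}(\mathcal{C})$ is a prevariety closed under concatenation.
   Context: Fix a finite alphabet $A$. A prevariety is a class of regular languages over $A$ containing $\emptyset$ and $A^*$, closed under union, intersection, complement, and under the quotients $u^{-1}L=\{w\mid uw\in L\}$ and $Lu^{-1}=\{w\mid wu\in L\}$ for $u\in A^*$. $\mathit{SF}(\mathcal{C})$ is the least class containing $\mathcal{C}$ and all singletons $\{a\}$ ($a\in A$), closed under union, complement and concatenation. *)

theory Defs
  imports Main
begin

text \<open>Words over the finite alphabet are lists over a finite type 'a; A* is UNIV.\<close>

definition conc :: "'a list set \<Rightarrow> 'a list set \<Rightarrow> 'a list set" where
  "conc K L = {u @ v | u v. u \<in> K \<and> v \<in> L}"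

definition lquot :: "'a list \<Rightarrow> 'a list set \<Rightarrow> 'a list set" where
  "lquot u L = {w. u @ w \<in> L}"

definition rquot :: "'a list set \<Rightarrow> 'a list \<Rightarrow> 'a list set" where
  "rquot L u = {w. w @ u \<in> L}"

definition star :: "'a list set \<Rightarrow> 'a list set" where
  "star L = (\<Union>n. ((conc L) ^^ n) {[]})"

inductive regular :: "'a list set \<Rightarrow> bool" where
  reg_empty: "regular {}"
| reg_eps: "regular {[]}"
| reg_letter: "regular {[a]}"
| reg_union: "regular K \<Longrightarrow> regular L \<Longrightarrow> regular (K \<union> L)"
| reg_conc: "regular K \<Longrightarrow> regular L \<Longrightarrow> regular (conc K L)"
| reg_star: "regular L \<Longrightarrow> regular (star L)"

definition prevariety :: "('a::finite) list set set \<Rightarrow> bool" where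
  "prevariety C \<longleftrightarrow>
     (\<forall>L\<in>C. regular L) \<and> {} \<in> C \<and> UNIV \<in> C \<and>
     (\<forall>K\<in>C. \<forall>L\<in>C. K \<union> L \<in> C) \<and>
     (\<forall>K\<in>C. \<forall>L\<in>C. K \<inter> L \<in> C) \<and>
     (\<forall>L\<in>C. - L \<in> C) \<and>
     (\<forall>L\<in>C. \<forall>u. lquot u L \<in> C \<and> rquot L u \<in> C)"

inductive_set SF :: "('a::finite) list set set \<Rightarrow> 'a list set set" for C where
  SF_base: "L \<in> C \<Longrightarrow> L \<in> SF C"
| SF_letter: "{[a]} \<in> SF C"
| SF_union: "K \<in> SF C \<Longrightarrow> L \<in> SF C \<Longrightarrow> K \<union> L \<in> SF C"
| SF_compl: "L \<in> SF C \<Longrightarrow> - L \<in> SF C"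
| SF_conc: "K \<in> SF C \<Longrightarrow> L \<in> SF C \<Longrightarrow> conc K L \<in> SF C"

definition closed_conc :: "'a list set set \<Rightarrow> bool" where
  "closed_conc D \<longleftrightarrow> (\<forall>K\<in>D. \<forall>L\<in>D. conc K L \<in> D)"

end

theory Submission
  imports Defs
begin

lemma lquot_append: "lquot (u@v) L = lquot v (lquot u L)" by (simp add: lquot_def)
lemma lquot_Nil[simp]: "lquot [] L = L" by (simp add: lquot_def)
lemma mem_lquot[simp]: "w \<in> lquot u L \<longleftrightarrow> u@w \<in> L" by (simp add: lquot_def)
lemma mem_rquot[simp]: "w \<in> rquot L u \<longleftrightarrow> w@u \<in> L" by (simp add: rquot_def)
lemma mem_conc: "w \<in> conc K L \<longleftrightarrow> (\<exists>u v. w = u@v \<and> u\<in>K \<and> v\<in>L)" by (auto simp: conc_def)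

inductive st :: "'a list set \<Rightarrow> 'a list \<Rightarrow> bool" for M where
  st_nil: "st M []"
| st_app: "x \<in> M \<Longrightarrow> st M y \<Longrightarrow> st M (x@y)"

lemma st_append: "st M x \<Longrightarrow> st M y \<Longrightarrow> st M (x@y)"
  by (induction rule: st.induct) (auto intro: st.intros)

lemma star_st: "w \<in> star M \<longleftrightarrow> st M w"
proof
  have "w \<in> (conc M ^^ n) {[]} \<Longrightarrow> st M w" for n
    by (induction n arbitrary: w) (auto simp: mem_conc intro: st.intros)
  then show "w \<in> star M \<Longrightarrow> st M w" by (auto simp: star_def)
next
  assume "st M w" then show "w \<in> star M"
  proof induction
    case st_nil
    have "[] \<in> (conc M ^^ 0) {[]}" by simp
    then show ?case unfolding star_def by blast
  next
    case (st_app x y) then obtain n where "y \<in> (conc M ^^ n) {[]}" by (auto simp: star_def)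
    then have "x@y \<in> (conc M ^^ Suc n) {[]}" using st_app by (auto simp: mem_conc)
    then show ?case unfolding star_def by blast
  qed
qed

lemma regular_word: "regular {w}"
proof (induction w)
  case Nil then show ?case by (rule reg_eps)
next
  case (Cons a w)
  have "{a#w} = conc {[a]} {w}" by (auto simp: conc_def)
  then show ?case using Cons reg_conc reg_letter by metis
qed

lemma regular_finite: "finite L \<Longrightarrow> regular L"
proof (induction rule: finite_induct)
  case empty then show ?case by (rule reg_empty)
next
  case (insert w F)
  have "insert w F = {w} \<union> F" by auto
  then show ?case using insert reg_union regular_word by metis
qed

lemma regular_UN: "finite I \<Longrightarrow> (\<forall>i\<in>I. regular (f i)) \<Longrightarrow> regular (\<Union>i\<in>I. f i)"
proof (induction rule: finite_induct)
  case empty then show ?case by (simp add: reg_empty)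
next
  case (insert i F)
  then show ?case by (simp add: reg_union)
qed

inductive kpath :: "'a list set set \<Rightarrow> 'a list set \<Rightarrow> 'a list \<Rightarrow> 'a list set \<Rightarrow> bool" for S where
  p_nil: "kpath S q [] q"
| p_one: "kpath S q [a] (lquot [a] q)"
| p_comp: "kpath S q u r \<Longrightarrow> r \<in> S \<Longrightarrow> kpath S r v p \<Longrightarrow> kpath S q (u@v) p"

lemma kpath_lquot: "kpath S q w p \<Longrightarrow> p = lquot w q"
  by (induction rule: kpath.induct) (auto simp: lquot_append)

lemma kpath_mono: "kpath S q w p \<Longrightarrow> S \<subseteq> S' \<Longrightarrow> kpath S' q w p"
  by (induction rule: kpath.induct) (auto intro: kpath.intros)

lemma kpath_empty: "kpath {} q w p \<Longrightarrow> w = [] \<or> (\<exists>a. w = [a])"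
  by (induction rule: kpath.induct) auto

lemma kpath_st: "st {w. kpath S s w s} y \<Longrightarrow> kpath (insert s S) s y s"
proof (induction rule: st.induct)
  case st_nil then show ?case by (rule p_nil)
next
  case (st_app x y)
  then have "kpath (insert s S) s x s" using kpath_mono by blast
  then show ?case using st_app p_comp by blast
qed

lemma wit3: "w = x@y@z \<Longrightarrow> P x \<Longrightarrow> Q y \<Longrightarrow> R z \<Longrightarrow> \<exists>x y z. w = x@y@z \<and> P x \<and> Q y \<and> R z"
  by blast

lemma kpath_insert:
  assumes "kpath (insert s S) q w p"
  shows "kpath S q w p \<or> (\<exists>x y z. w = x@y@z \<and> kpath S q x s \<and> st {w. kpath S s w s} y \<and> kpath S s z p)"
  using assms
proof (induction rule: kpath.induct)
  case (p_nil q) then show ?case by (simp add: kpath.p_nil)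
next
  case (p_one q a) then show ?case by (simp add: kpath.p_one)
next
  case (p_comp q u r v p)
  let ?M = "{w. kpath S s w s}"
  from p_comp.hyps(2) have "r = s \<or> r \<in> S" by simp
  then show ?case
  proof
    assume rs: "r = s"
    have "\<exists>x y. u = x@y \<and> kpath S q x s \<and> st ?M y"
      using p_comp.IH(1)
    proof
      assume "kpath S q u r"
      then have "u = u@[] \<and> kpath S q u s \<and> st ?M []" using rs by (simp add: st_nil)
      then show ?thesis by (rule exI[of _ u, OF exI[of _ "[]"]])
    next
      assume "\<exists>x y z. u = x@y@z \<and> kpath S q x s \<and> st ?M y \<and> kpath S s z r"
      then obtain x y z where h: "u = x@y@z" "kpath S q x s" "st ?M y" "kpath S s z r" by blast
      have "z \<in> ?M" using h(4) rs by simp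
      then have "st ?M (z@[])" using st_nil by (rule st_app)
      then have "st ?M (y@z)" using h(3) st_append by simp
      then have "u = x@(y@z) \<and> kpath S q x s \<and> st ?M (y@z)" using h by simp
      then show ?thesis by (rule exI[of _ x, OF exI[of _ "y@z"]])
    qed
    then obtain x y where A: "u = x@y" "kpath S q x s" "st ?M y" by blast
    have "\<exists>y z. v = y@z \<and> st ?M y \<and> kpath S s z p"
      using p_comp.IH(2)
    proof
      assume "kpath S r v p"
      then have "v = []@v \<and> st ?M [] \<and> kpath S s v p" using rs by (simp add: st_nil)
      then show ?thesis by (rule exI[of _ "[]", OF exI[of _ v]])
    next
      assume "\<exists>x y z. v = x@y@z \<and> kpath S r x s \<and> st ?M y \<and> kpath S s z p"
      then obtain x y z where h: "v = x@y@z" "kpath S r x s" "st ?M y" "kpath S s z p" by blast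
      have "x \<in> ?M" using h(2) rs by simp
      then have "st ?M (x@y)" using h(3) by (rule st_app)
      then have "v = (x@y)@z \<and> st ?M (x@y) \<and> kpath S s z p" using h by simp
      then show ?thesis by (rule exI[of _ "x@y", OF exI[of _ z]])
    qed
    then obtain y' z where B: "v = y'@z" "st ?M y'" "kpath S s z p" by blast
    have "u@v = x@(y@y')@z" using A B by simp
    moreover have "st ?M (y@y')" using A(3) B(2) by (rule st_append)
    ultimately have "\<exists>x y z. u@v = x@y@z \<and> kpath S q x s \<and> st ?M y \<and> kpath S s z p"
      using A(2) B(3) by (intro wit3)
    then show ?thesis by (rule disjI2)
  next
    assume rS: "r \<in> S"
    show ?thesis using p_comp.IH(1)
    proof
      assume u1: "kpath S q u r"
      show ?thesis using p_comp.IH(2)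
      proof
        assume "kpath S r v p"
        then have "kpath S q (u@v) p" using u1 rS by (intro kpath.p_comp)
        then show ?thesis by (rule disjI1)
      next
        assume "\<exists>x y z. v = x@y@z \<and> kpath S r x s \<and> st ?M y \<and> kpath S s z p"
        then obtain x y z where h: "v = x@y@z" "kpath S r x s" "st ?M y" "kpath S s z p" by blast
        have "kpath S q (u@x) s" using u1 rS h(2) by (intro kpath.p_comp)
        moreover have "u@v = (u@x)@y@z" using h by simp
        ultimately have "\<exists>x y z. u@v = x@y@z \<and> kpath S q x s \<and> st ?M y \<and> kpath S s z p"
          using h(3,4) by (intro wit3)
        then show ?thesis by (rule disjI2)
      qed
    next
      assume "\<exists>x y z. u = x@y@z \<and> kpath S q x s \<and> st ?M y \<and> kpath S s z r"
      then obtain x y z where g: "u = x@y@z" "kpath S q x s" "st ?M y" "kpath S s z r" by blast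
      show ?thesis using p_comp.IH(2)
      proof
        assume "kpath S r v p"
        then have "kpath S s (z@v) p" using g(4) rS by (intro kpath.p_comp)
        moreover have "u@v = x@y@(z@v)" using g by simp
        ultimately have "\<exists>x y z. u@v = x@y@z \<and> kpath S q x s \<and> st ?M y \<and> kpath S s z p"
          using g(2,3) by (intro wit3)
        then show ?thesis by (rule disjI2)
      next
        assume "\<exists>x y z. v = x@y@z \<and> kpath S r x s \<and> st ?M y \<and> kpath S s z p"
        then obtain x' y' z' where h: "v = x'@y'@z'" "kpath S r x' s" "st ?M y'" "kpath S s z' p" by blast
        have "kpath S s (z@x') s" using g(4) rS h(2) by (intro kpath.p_comp)
        then have "z@x' \<in> ?M" by simp
        then have "st ?M ((z@x')@y')" using h(3) by (rule st_app)
        with g(3) have "st ?M (y@(z@x')@y')" by (rule st_append)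
        moreover have "u@v = x@(y@(z@x')@y')@z'" using g h by simp
        ultimately have "\<exists>x y z. u@v = x@y@z \<and> kpath S q x s \<and> st ?M y \<and> kpath S s z p"
          using g(2) h(4) by (intro wit3)
        then show ?thesis by (rule disjI2)
      qed
    qed
  qed
qed

lemma kpath_regular:
  fixes S :: "('a::finite) list set set"
  shows "finite S \<Longrightarrow> regular {w. kpath S q w p}"
proof (induction S arbitrary: q p rule: finite_induct)
  case empty
  have "{w. kpath {} q w p} \<subseteq> insert [] (range (\<lambda>a. [a]))" using kpath_empty by blast
  then have "finite {w. kpath ({}::'a list set set) q w p}" by (rule finite_subset) simp
  then show ?case by (rule regular_finite)
next
  case (insert s S)
  let ?P = "\<lambda>q p. {w. kpath S q w p}"
  have "{w. kpath (insert s S) q w p} = ?P q p \<union> conc (?P q s) (conc (star (?P s s)) (?P s p))"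
  proof
    show "{w. kpath (insert s S) q w p} \<subseteq> ?P q p \<union> conc (?P q s) (conc (star (?P s s)) (?P s p))"
      using kpath_insert by (fastforce simp: mem_conc star_st)
  next
    show "?P q p \<union> conc (?P q s) (conc (star (?P s s)) (?P s p)) \<subseteq> {w. kpath (insert s S) q w p}"
    proof
      fix w assume "w \<in> ?P q p \<union> conc (?P q s) (conc (star (?P s s)) (?P s p))"
      then show "w \<in> {w. kpath (insert s S) q w p}"
      proof
        assume "w \<in> ?P q p" then show ?thesis using kpath_mono by blast
      next
        assume "w \<in> conc (?P q s) (conc (star (?P s s)) (?P s p))"
        then obtain x y z where h: "w = x@y@z" "kpath S q x s" "st (?P s s) y" "kpath S s z p"
          by (auto simp: mem_conc star_st)
        have 1: "kpath (insert s S) q x s" "kpath (insert s S) s z p" using h kpath_mono by blast+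
        have 2: "kpath (insert s S) s y s" using h(3) kpath_st by blast
        have "kpath (insert s S) s (y@z) p" using 1 2 kpath.p_comp by blast
        then have "kpath (insert s S) q (x@y@z) p" using 1 kpath.p_comp by blast
        then show ?thesis using h by simp
      qed
    qed
  qed
  then show ?case using insert.IH by (simp add: reg_union reg_conc reg_star)
qed

lemma fq_regular:
  fixes L :: "('a::finite) list set"
  assumes fin: "finite (range (\<lambda>u. lquot u L))"
  shows "regular L"
proof -
  let ?Q = "range (\<lambda>u. lquot u L)"
  have all: "kpath ?Q L w (lquot w L)" for w
  proof (induction w rule: rev_induct)
    case Nil then show ?case by (simp add: p_nil)
  next
    case (snoc a w)
    have "kpath ?Q (lquot w L) [a] (lquot [a] (lquot w L))" by (rule p_one)
    then have "kpath ?Q L (w@[a]) (lquot [a] (lquot w L))" using snoc p_comp by blast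
    then show ?case by (simp add: lquot_append)
  qed
  have "L = (\<Union>p\<in>{p\<in>?Q. [] \<in> p}. {w. kpath ?Q L w p})"
  proof
    show "L \<subseteq> (\<Union>p\<in>{p\<in>?Q. [] \<in> p}. {w. kpath ?Q L w p})"
    proof
      fix w assume "w \<in> L"
      then have "[] \<in> lquot w L" by simp
      then show "w \<in> (\<Union>p\<in>{p\<in>?Q. [] \<in> p}. {w. kpath ?Q L w p})" using all by blast
    qed
  next
    show "(\<Union>p\<in>{p\<in>?Q. [] \<in> p}. {w. kpath ?Q L w p}) \<subseteq> L"
      using kpath_lquot by fastforce
  qed
  moreover have "regular (\<Union>p\<in>{p\<in>?Q. [] \<in> p}. {w. kpath ?Q L w p})"
    using fin by (intro regular_UN ballI kpath_regular) auto
  ultimately show ?thesis by simp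
qed


lemma fq_intro:
  assumes "finite F" "L \<in> F" "\<And>X a. X \<in> F \<Longrightarrow> lquot [a] X \<in> F"
  shows "finite (range (\<lambda>u. lquot u L))"
proof -
  have "lquot u X \<in> F" if "X \<in> F" for u X
    using that
  proof (induction u arbitrary: X)
    case Nil then show ?case by simp
  next
    case (Cons a u)
    have "lquot (a#u) X = lquot u (lquot [a] X)" using lquot_append[of "[a]" u X] by simp
    then show ?case using Cons assms(3) by simp
  qed
  then have "range (\<lambda>u. lquot u L) \<subseteq> F" using assms(2) by blast
  then show ?thesis using assms(1) finite_subset by blast
qed

lemma finite_fq: "finite L \<Longrightarrow> finite (range (\<lambda>u. lquot u L))"
proof -
  assume fin: "finite L"
  let ?D = "\<Union>w\<in>L. (\<lambda>i. drop i w) ` {..length w}"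
  have "lquot u L \<subseteq> ?D" for u
  proof
    fix w assume "w \<in> lquot u L"
    then have "u@w \<in> L" by simp
    moreover have "w = drop (length u) (u@w)" by simp
    ultimately show "w \<in> ?D" by fastforce
  qed
  then have "range (\<lambda>u. lquot u L) \<subseteq> Pow ?D" by blast
  moreover have "finite ?D" using fin by simp
  ultimately show ?thesis using finite_subset by blast
qed

lemma lquot_conc1: "lquot [a] (conc X Y) = conc (lquot [a] X) Y \<union> (if [] \<in> X then lquot [a] Y else {})"
proof (rule set_eqI)
  fix w
  show "w \<in> lquot [a] (conc X Y) \<longleftrightarrow> w \<in> conc (lquot [a] X) Y \<union> (if [] \<in> X then lquot [a] Y else {})"
  proof
    assume "w \<in> lquot [a] (conc X Y)"
    then obtain x y where h: "a#w = x@y" "x \<in> X" "y \<in> Y" by (auto simp: mem_conc)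
    show "w \<in> conc (lquot [a] X) Y \<union> (if [] \<in> X then lquot [a] Y else {})"
    proof (cases x)
      case Nil then show ?thesis using h by auto
    next
      case (Cons b x')
      then show ?thesis using h by (auto simp: mem_conc)
    qed
  next
    assume "w \<in> conc (lquot [a] X) Y \<union> (if [] \<in> X then lquot [a] Y else {})"
    then show "w \<in> lquot [a] (conc X Y)"
    proof
      assume "w \<in> conc (lquot [a] X) Y"
      then obtain x y where h: "w = x@y" "a#x \<in> X" "y \<in> Y" by (auto simp: mem_conc)
      then have "a#w = (a#x)@y" by simp
      then have "a#w \<in> conc X Y" using h unfolding mem_conc by blast
      then show ?thesis by simp
    next
      assume "w \<in> (if [] \<in> X then lquot [a] Y else {})"
      then have "[] \<in> X" "a#w \<in> Y" by (auto split: if_splits)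
      then have "a#w = []@(a#w)" by simp
      then have "a#w \<in> conc X Y" using \<open>[] \<in> X\<close> \<open>a#w \<in> Y\<close> unfolding mem_conc by blast
      then show ?thesis by simp
    qed
  qed
qed

lemma st_Cons: "st L v \<Longrightarrow> v = a#w \<Longrightarrow> \<exists>x y. w = x@y \<and> a#x \<in> L \<and> st L y"
proof (induction arbitrary: w rule: st.induct)
  case st_nil then show ?case by simp
next
  case (st_app x y)
  show ?case
  proof (cases x)
    case Nil then show ?thesis using st_app by simp
  next
    case (Cons b x')
    then show ?thesis using st_app by auto
  qed
qed

lemma lquot_star1: "lquot [a] (star L) = conc (lquot [a] L) (star L)"
proof (rule set_eqI)
  fix w
  show "w \<in> lquot [a] (star L) \<longleftrightarrow> w \<in> conc (lquot [a] L) (star L)"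
  proof
    assume "w \<in> lquot [a] (star L)"
    then have "st L (a#w)" by (simp add: star_st)
    from st_Cons[OF this refl] obtain x y where h: "w = x@y" "a#x \<in> L" "st L y" by blast
    then have "x \<in> lquot [a] L" "y \<in> star L" by (simp_all add: star_st)
    then show "w \<in> conc (lquot [a] L) (star L)" using h(1) unfolding mem_conc by blast
  next
    assume "w \<in> conc (lquot [a] L) (star L)"
    then obtain x y where h: "w = x@y" "x \<in> lquot [a] L" "y \<in> star L" unfolding mem_conc by blast
    then have "a#x \<in> L" "st L y" by (simp_all add: star_st)
    then have "st L ((a#x)@y)" by (rule st_app)
    then show "w \<in> lquot [a] (star L)" using h by (simp add: star_st)
  qed
qed

lemma conc_Un1: "conc (A \<union> B) C = conc A C \<union> conc B C" by (auto simp: conc_def)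
lemma conc_UN1: "conc (\<Union>T) C = (\<Union>X\<in>T. conc X C)" by (auto simp: conc_def)
lemma lquot_Un: "lquot u (A \<union> B) = lquot u A \<union> lquot u B" by auto
lemma lquot_Union: "lquot u (\<Union>T) = (\<Union>X\<in>T. lquot u X)" by auto
lemma lquot_compl: "lquot u (- A) = - lquot u A" by auto

lemma fq_union:
  assumes "finite (range (\<lambda>u. lquot u K))" "finite (range (\<lambda>u. lquot u L))"
  shows "finite (range (\<lambda>u. lquot u (K \<union> L)))"
proof -
  have eq: "range (\<lambda>u. lquot u (K \<union> L)) = (\<lambda>(X,Y). X \<union> Y) ` range (\<lambda>u. (lquot u K, lquot u L))"
    by (simp add: image_image lquot_Un del: mem_lquot)
  have "range (\<lambda>u. (lquot u K, lquot u L)) \<subseteq> range (\<lambda>u. lquot u K) \<times> range (\<lambda>u. lquot u L)"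
    by blast
  then have "finite (range (\<lambda>u. (lquot u K, lquot u L)))"
    using assms by (meson finite_SigmaI finite_subset)
  then show ?thesis unfolding eq by (rule finite_imageI)
qed

lemma fq_compl:
  assumes "finite (range (\<lambda>u. lquot u L))"
  shows "finite (range (\<lambda>u. lquot u (- L)))"
proof -
  have "range (\<lambda>u. lquot u (- L)) = uminus ` range (\<lambda>u. lquot u L)"
    by (simp add: image_image lquot_compl del: mem_lquot)
  then show ?thesis using assms by simp
qed

lemma fq_conc:
  assumes fK: "finite (range (\<lambda>u. lquot u K))" and fL: "finite (range (\<lambda>u. lquot u L))"
  shows "finite (range (\<lambda>u. lquot u (conc K L)))"
proof -
  let ?QK = "range (\<lambda>u. lquot u K)" and ?QL = "range (\<lambda>u. lquot u L)"
  let ?F = "(\<lambda>(X,T). conc X L \<union> \<Union>T) ` (?QK \<times> Pow ?QL)"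
  show ?thesis
  proof (rule fq_intro[of ?F])
    show "finite ?F" using fK fL by simp
    have "(lquot [] K, {}) \<in> ?QK \<times> Pow ?QL" by blast
    then have "(\<lambda>(X,T). conc X L \<union> \<Union>T) (lquot [] K, {}) \<in> ?F" by (rule imageI)
    then show "conc K L \<in> ?F" by simp
  next
    fix Z a assume "Z \<in> ?F"
    then obtain u T where Z: "Z = conc (lquot u K) L \<union> \<Union>T" "T \<subseteq> ?QL" by auto
    define T' where "T' = lquot [a] ` T \<union> (if [] \<in> lquot u K then {lquot [a] L} else {})"
    have "lquot [a] Z = conc (lquot [a] (lquot u K)) L \<union> \<Union>T'"
    proof (cases "[] \<in> lquot u K")
      case True
      then have "T' = insert (lquot [a] L) (lquot [a] ` T)" unfolding T'_def by simp
      then show ?thesis unfolding Z using True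
        by (simp add: lquot_conc1 lquot_Un lquot_Union Un_ac del: mem_lquot)
    next
      case False
      then have "T' = lquot [a] ` T" unfolding T'_def by simp
      then show ?thesis unfolding Z using False
        by (simp add: lquot_conc1 lquot_Un lquot_Union del: mem_lquot)
    qed
    also have "\<dots> = conc (lquot (u@[a]) K) L \<union> \<Union>T'" by (simp add: lquot_append)
    finally have eq: "lquot [a] Z = conc (lquot (u@[a]) K) L \<union> \<Union>T'" .
    have "lquot [a] (lquot v L) = lquot (v@[a]) L" for v by (simp add: lquot_append)
    then have "T' \<subseteq> ?QL" using Z(2) unfolding T'_def
      by (auto simp del: mem_lquot split: if_splits)
    moreover have "lquot (u@[a]) K \<in> ?QK" by (rule rangeI)
    ultimately have "(lquot (u@[a]) K, T') \<in> ?QK \<times> Pow ?QL" by simp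
    then have "(\<lambda>(X,T). conc X L \<union> \<Union>T) (lquot (u@[a]) K, T') \<in> ?F" by (rule imageI)
    then show "lquot [a] Z \<in> ?F" using eq by simp
  qed
qed

lemma fq_star:
  assumes fL: "finite (range (\<lambda>u. lquot u L))"
  shows "finite (range (\<lambda>u. lquot u (star L)))"
proof -
  let ?QL = "range (\<lambda>u. lquot u L)"
  let ?G = "\<lambda>T. conc (\<Union>T) (star L)"
  let ?F = "insert (star L) (?G ` Pow ?QL)"
  have QLa: "lquot [a] X \<in> ?QL" if "X \<in> ?QL" for X a
  proof -
    from that obtain v where "X = lquot v L" by blast
    then have "lquot [a] X = lquot (v@[a]) L" by (simp add: lquot_append del: mem_lquot)
    then show ?thesis by simp
  qed
  have QL0: "lquot [a] L \<in> ?QL" for a by (rule rangeI)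
  show ?thesis
  proof (rule fq_intro[of ?F])
    show "finite ?F" using fL by simp
    show "star L \<in> ?F" by (rule insertI1)
  next
    fix Z a assume "Z \<in> ?F"
    then show "lquot [a] Z \<in> ?F"
    proof (rule insertE)
      assume "Z = star L"
      then have 1: "lquot [a] Z = ?G {lquot [a] L}" by (simp add: lquot_star1 del: mem_lquot)
      have "{lquot [a] L} \<in> Pow ?QL" using QL0 by simp
      then have 2: "?G {lquot [a] L} \<in> ?G ` Pow ?QL" by (rule imageI)
      show ?thesis unfolding 1 using 2 by (rule insertI2)
    next
      assume "Z \<in> ?G ` Pow ?QL"
      then obtain T where Z: "Z = ?G T" "T \<subseteq> ?QL" by blast
      define T' where "T' = lquot [a] ` T \<union> (if [] \<in> \<Union>T then {lquot [a] L} else {})"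
      have "lquot [a] Z = ?G T'"
      proof (cases "[] \<in> \<Union>T")
        case True
        then have "T' = lquot [a] ` T \<union> {lquot [a] L}" unfolding T'_def by simp
        then show ?thesis unfolding Z using True
          by (simp add: lquot_conc1 lquot_star1 lquot_Union conc_Un1 Un_ac del: mem_lquot)
      next
        case False
        then have "T' = lquot [a] ` T" unfolding T'_def by simp
        then show ?thesis unfolding Z using False
          by (simp add: lquot_conc1 lquot_Union del: mem_lquot)
      qed
      moreover have "T' \<subseteq> ?QL" unfolding T'_def using Z(2) QLa QL0 by (auto simp del: mem_lquot split: if_splits)
      then have "?G T' \<in> ?G ` Pow ?QL" by (intro imageI) simp
      ultimately show ?thesis by (simp only:) (rule insertI2)
    qed
  qed
qed

lemma regular_fq: "regular L \<Longrightarrow> finite (range (\<lambda>u. lquot u L))"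
proof (induction rule: regular.induct)
  case reg_empty then show ?case by (rule finite_fq) simp
next
  case reg_eps then show ?case by (rule finite_fq) simp
next
  case (reg_letter a) then show ?case by (rule finite_fq) simp
next
  case (reg_union K L) show ?case by (rule fq_union[OF reg_union.IH])
next
  case (reg_conc K L) show ?case by (rule fq_conc[OF reg_conc.IH])
next
  case (reg_star L) show ?case by (rule fq_star[OF reg_star.IH])
qed


lemma SF_fq:
  assumes "prevariety C" "L \<in> SF C"
  shows "finite (range (\<lambda>u. lquot u L))"
  using assms(2)
proof induction
  case (SF_base L)
  then have "regular L" using assms(1) unfolding prevariety_def by blast
  then show ?case by (rule regular_fq)
next
  case (SF_letter a) then show ?case by (rule finite_fq) simp
next
  case (SF_union K L) show ?case by (rule fq_union[OF SF_union.IH])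
next
  case (SF_compl L) show ?case by (rule fq_compl[OF SF_compl.IH])
next
  case (SF_conc K L) show ?case by (rule fq_conc[OF SF_conc.IH])
qed

lemma SF_UN:
  assumes "{} \<in> SF C"
  shows "finite I \<Longrightarrow> (\<forall>i\<in>I. f i \<in> SF C) \<Longrightarrow> (\<Union>i\<in>I. f i) \<in> SF C"
proof (induction rule: finite_induct)
  case empty then show ?case using assms by simp
next
  case (insert i F) then show ?case by (simp add: SF_union)
qed

lemma SF_eps:
  assumes "prevariety C"
  shows "{[]} \<in> SF C"
proof -
  have e: "{} \<in> SF C" "UNIV \<in> SF C" using assms by (auto simp: prevariety_def intro: SF_base)
  let ?X = "\<Union>a\<in>(UNIV::'a set). {[a]}"
  have "?X \<in> SF C" using e(1) by (intro SF_UN) (auto intro: SF_letter)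
  then have "- conc ?X UNIV \<in> SF C" using e(2) by (intro SF_compl SF_conc)
  moreover have "- conc ?X UNIV = {[]}"
  proof (rule set_eqI)
    fix w :: "'a list"
    show "w \<in> - conc ?X UNIV \<longleftrightarrow> w \<in> {[]}"
    proof (cases w)
      case Nil then show ?thesis by (auto simp: mem_conc)
    next
      case (Cons a v)
      have "w = [a]@v" "[a] \<in> ?X" "v \<in> UNIV" using Cons by auto
      then have "w \<in> conc ?X UNIV" unfolding mem_conc by blast
      then show ?thesis using Cons by simp
    qed
  qed
  ultimately show ?thesis by simp
qed

lemma lquot_letter: "lquot u {[a]} \<in> {{[a]}, {[]}, {}}"
proof (cases u)
  case Nil then show ?thesis by simp
next
  case (Cons b u')
  show ?thesis
  proof (cases "b = a \<and> u' = []")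
    case True
    have "lquot u {[a]} = {[]}" using Cons True by auto
    then show ?thesis by simp
  next
    case False
    have "lquot u {[a]} = {}" using Cons False by auto
    then show ?thesis by simp
  qed
qed

lemma rquot_letter: "rquot {[a]} u \<in> {{[a]}, {[]}, {}}"
proof (cases "u = []")
  case True then show ?thesis by (simp add: rquot_def)
next
  case False
  show ?thesis
  proof (cases "u = [a]")
    case True
    have "rquot {[a]} u = {[]}" using True by auto
    then show ?thesis by simp
  next
    case F2: False
    have "rquot {[a]} u = {}"
    proof (rule set_eqI)
      fix w show "w \<in> rquot {[a]} u \<longleftrightarrow> w \<in> {}"
        using False F2 by (auto simp: append_eq_Cons_conv)
    qed
    then show ?thesis by simp
  qed
qed

lemma lquot_conc:
  "lquot u (conc K L) = conc (lquot u K) L \<union> (\<Union>i\<in>{i. i \<le> length u \<and> take i u \<in> K}. lquot (drop i u) L)"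
proof (rule set_eqI)
  fix w
  show "w \<in> lquot u (conc K L) \<longleftrightarrow> w \<in> conc (lquot u K) L \<union> (\<Union>i\<in>{i. i \<le> length u \<and> take i u \<in> K}. lquot (drop i u) L)"
  proof
    assume "w \<in> lquot u (conc K L)"
    then obtain x y where h: "u@w = x@y" "x \<in> K" "y \<in> L" by (auto simp: mem_conc)
    then obtain us where "(u = x@us \<and> us@w = y) \<or> (u@us = x \<and> w = us@y)"
      by (auto simp: append_eq_append_conv2)
    then show "w \<in> conc (lquot u K) L \<union> (\<Union>i\<in>{i. i \<le> length u \<and> take i u \<in> K}. lquot (drop i u) L)"
    proof
      assume a: "u = x@us \<and> us@w = y"
      then have "length x \<in> {i. i \<le> length u \<and> take i u \<in> K}" using h by auto
      moreover have "w \<in> lquot (drop (length x) u) L" using a h by auto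
      ultimately show ?thesis by blast
    next
      assume "u@us = x \<and> w = us@y"
      then show ?thesis using h by (auto simp: mem_conc)
    qed
  next
    assume "w \<in> conc (lquot u K) L \<union> (\<Union>i\<in>{i. i \<le> length u \<and> take i u \<in> K}. lquot (drop i u) L)"
    then show "w \<in> lquot u (conc K L)"
    proof
      assume "w \<in> conc (lquot u K) L"
      then obtain x y where h: "w = x@y" "u@x \<in> K" "y \<in> L" by (auto simp: mem_conc)
      then have "u@w = (u@x)@y" by simp
      then have "u@w \<in> conc K L" using h unfolding mem_conc by blast
      then show ?thesis by simp
    next
      assume "w \<in> (\<Union>i\<in>{i. i \<le> length u \<and> take i u \<in> K}. lquot (drop i u) L)"
      then obtain i where "take i u \<in> K" "drop i u @ w \<in> L" by auto
      moreover have "u@w = take i u @ (drop i u @ w)" by simp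
      ultimately have "u@w \<in> conc K L" unfolding mem_conc by blast
      then show ?thesis by simp
    qed
  qed
qed

lemma rquot_conc:
  "rquot (conc K L) u = conc K (rquot L u) \<union> (\<Union>i\<in>{i. i \<le> length u \<and> drop i u \<in> L}. rquot K (take i u))"
proof (rule set_eqI)
  fix w
  show "w \<in> rquot (conc K L) u \<longleftrightarrow> w \<in> conc K (rquot L u) \<union> (\<Union>i\<in>{i. i \<le> length u \<and> drop i u \<in> L}. rquot K (take i u))"
  proof
    assume "w \<in> rquot (conc K L) u"
    then obtain x y where h: "w@u = x@y" "x \<in> K" "y \<in> L" by (auto simp: mem_conc)
    then obtain us where "(w = x@us \<and> us@u = y) \<or> (w@us = x \<and> u = us@y)"
      by (auto simp: append_eq_append_conv2)
    then show "w \<in> conc K (rquot L u) \<union> (\<Union>i\<in>{i. i \<le> length u \<and> drop i u \<in> L}. rquot K (take i u))"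
    proof
      assume "w = x@us \<and> us@u = y"
      then show ?thesis using h by (auto simp: mem_conc)
    next
      assume a: "w@us = x \<and> u = us@y"
      then have "length us \<in> {i. i \<le> length u \<and> drop i u \<in> L}" using h by auto
      moreover have "w \<in> rquot K (take (length us) u)" using a h by auto
      ultimately show ?thesis by blast
    qed
  next
    assume "w \<in> conc K (rquot L u) \<union> (\<Union>i\<in>{i. i \<le> length u \<and> drop i u \<in> L}. rquot K (take i u))"
    then show "w \<in> rquot (conc K L) u"
    proof
      assume "w \<in> conc K (rquot L u)"
      then obtain x y where h: "w = x@y" "x \<in> K" "y@u \<in> L" by (auto simp: mem_conc)
      then have "w@u = x@(y@u)" by simp
      then have "w@u \<in> conc K L" using h unfolding mem_conc by blast
      then show ?thesis by simp
    next
      assume "w \<in> (\<Union>i\<in>{i. i \<le> length u \<and> drop i u \<in> L}. rquot K (take i u))"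
      then obtain i where "w @ take i u \<in> K" "drop i u \<in> L" by auto
      moreover have "w@u = (w @ take i u) @ drop i u" by simp
      ultimately have "w@u \<in> conc K L" unfolding mem_conc by blast
      then show ?thesis by simp
    qed
  qed
qed

lemma prev_facts:
  assumes "prevariety C"
  shows "{} \<in> C" "UNIV \<in> C" "\<And>L u. L \<in> C \<Longrightarrow> lquot u L \<in> C" "\<And>L u. L \<in> C \<Longrightarrow> rquot L u \<in> C"
    "\<And>L. L \<in> C \<Longrightarrow> regular L"
  using assms unfolding prevariety_def by blast+

lemma SF_quot:
  assumes C: "prevariety C" and "L \<in> SF C"
  shows "lquot u L \<in> SF C \<and> rquot L u \<in> SF C"
  using assms(2)
proof (induction arbitrary: u)
  case (SF_base L)
  then have "lquot u L \<in> C" "rquot L u \<in> C" using prev_facts[OF C] by blast+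
  then show ?case by (blast intro: SF.SF_base)
next
  case (SF_letter a)
  have e: "{} \<in> SF C" using prev_facts(1)[OF C] by (rule SF.SF_base)
  have A: "X \<in> SF C" if "X \<in> {{[a]}, {[]}, {}}" for X
    using that SF.SF_letter[of a C] SF_eps[OF C] e by blast
  show ?case using A[OF lquot_letter[of u a]] A[OF rquot_letter[of a u]] by (rule conjI)
next
  case (SF_union K L)
  have "rquot (K \<union> L) u = rquot K u \<union> rquot L u" by auto
  moreover have "lquot u (K \<union> L) = lquot u K \<union> lquot u L" by (rule lquot_Un)
  ultimately show ?case using SF_union.IH[of u] by (simp only:) (blast intro: SF.SF_union)
next
  case (SF_compl L)
  have "rquot (- L) u = - rquot L u" by auto
  moreover have "lquot u (- L) = - lquot u L" by (rule lquot_compl)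
  ultimately show ?case using SF_compl.IH[of u] by (simp only:) (blast intro: SF.SF_compl)
next
  case (SF_conc K L)
  have e: "{} \<in> SF C" using prev_facts(1)[OF C] by (rule SF.SF_base)
  have f1: "finite {i. i \<le> length u \<and> take i u \<in> K}" by (rule finite_subset[of _ "{..length u}"]) auto
  have f2: "finite {i. i \<le> length u \<and> drop i u \<in> L}" by (rule finite_subset[of _ "{..length u}"]) auto
  have l1: "lquot v L \<in> SF C" for v using SF_conc.IH(2) by blast
  have l2: "rquot K v \<in> SF C" for v using SF_conc.IH(1) by blast
  have l3: "lquot u K \<in> SF C" "rquot L u \<in> SF C" using SF_conc.IH by blast+
  have "(\<Union>i\<in>{i. i \<le> length u \<and> take i u \<in> K}. lquot (drop i u) L) \<in> SF C"
    using e f1 l1 by (intro SF_UN) blast+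
  then have "lquot u (conc K L) \<in> SF C"
    unfolding lquot_conc using l3 SF_conc.hyps by (blast intro: SF.SF_union SF.SF_conc)
  moreover have "(\<Union>i\<in>{i. i \<le> length u \<and> drop i u \<in> L}. rquot K (take i u)) \<in> SF C"
    using e f2 l2 by (intro SF_UN) blast+
  then have "rquot (conc K L) u \<in> SF C"
    unfolding rquot_conc using l3 SF_conc.hyps by (blast intro: SF.SF_union SF.SF_conc)
  ultimately show ?case by (rule conjI)
qed

theorem proposition3p2:
  fixes C :: "('a::finite) list set set"
  assumes "prevariety C"
  shows "prevariety (SF C) \<and> closed_conc (SF C)"
proof -
  have e1: "{} \<in> SF C" using prev_facts(1)[OF assms] by (rule SF_base)
  have e2: "UNIV \<in> SF C" using prev_facts(2)[OF assms] by (rule SF_base)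
  have inter: "\<forall>K\<in>SF C. \<forall>L\<in>SF C. K \<inter> L \<in> SF C"
  proof (intro ballI)
    fix K L assume that: "K \<in> SF C" "L \<in> SF C"
    have eq: "K \<inter> L = - (- K \<union> - L)" by auto
    show "K \<inter> L \<in> SF C" unfolding eq using that by (intro SF_compl SF_union)
  qed
  have un: "\<forall>K\<in>SF C. \<forall>L\<in>SF C. K \<union> L \<in> SF C" by (blast intro: SF_union)
  have co: "\<forall>L\<in>SF C. - L \<in> SF C" by (blast intro: SF_compl)
  have cc: "\<forall>K\<in>SF C. \<forall>L\<in>SF C. conc K L \<in> SF C" by (blast intro: SF_conc)
  have qu: "\<forall>L\<in>SF C. \<forall>u. lquot u L \<in> SF C \<and> rquot L u \<in> SF C"
    using SF_quot[OF assms] by blast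
  have reg: "\<forall>L\<in>SF C. regular L"
  proof
    fix L assume "L \<in> SF C"
    then have "finite (range (\<lambda>u. lquot u L))" by (rule SF_fq[OF assms])
    then show "regular L" by (rule fq_regular)
  qed
  show ?thesis unfolding prevariety_def closed_conc_def
    using reg e1 e2 un inter co qu cc by (intro conjI)
qed

end
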